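(* Assume that $0<h<1$, that $2/h$ is not an integer, and that $$\lim_{\beta\to\infty}|\Lambda_{L_\beta}|^{1/2}\big\{e^{-[(n_0+1)h-2]\beta}+e^{-h\beta}\big\}=0\quad\text{and}\quad\lim_{\beta\to\infty}|\Lambda_{L_\beta}|^{2}e^{-(2-h)\beta}=0.$$ Then $$\lim_{\beta\to\infty}\frac{\mathrm{cap}(\mathbf{-1},\mathbf{+1})}{\mathrm{cap}(\mathbf{-1},\{\mathbf 0,\mathbf{+1}\})}=1.$$
   Context: Blume–Capel model. Fix $h\in(0,2)$, $n_0=\lfloor 2/h\rfloor$. For each $\beta>0$, $L=L_\beta$ is a positive integer (with $L_\beta\ge n_0(n_0+1)+2$), $\Lambda_L$ the two-dimensional discrete torus of side $L$, $\Omega_L=\{-1,0,1\}^{\Lambda_L}$. Hamiltonian $\mathbb H(\sigma)=\sum(\sigma(y)-\sigma(x))^2-h\sum_x\sigma(x)$, first sum over unordered nearest-neighbour pairs. $\sigma^{x,\pm}$: replace $\sigma(x)$ by $\sigma(x)\pm1$ modulo $3$ in $\{-1,0,1\}$. $(\sigma_t)$ jumps from $\sigma$ to $\sigma^{x,\pm}$ at rate $R_\beta(\sigma,\sigma^{x,\pm})=\exp\{-\beta[\mathbb H(\sigma^{x,\pm})-\mathbb H(\sigma)]_+\}$; $\mathbb P_\sigma$ its law. $\mu_\beta(\sigma)=Z_\beta^{-1}e^{-\beta\mathbb H(\sigma)}$, $\lambda_\beta(\sigma)=\sum_{\sigma'}R_\beta(\sigma,\sigma')$, $H_A=\inf\{t>0:\sigma_t\in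 A\}$, $H_A^+=\inf\{t>T_1:\sigma_t\in A\}$ ($T_1$ first jump time). For disjoint $A,B$, $\mathrm{cap}(A,B)=\sum_{\sigma\in A}\mu_\beta(\sigma)\lambda_\beta(\sigma)\mathbb P_\sigma[H_B<H_A^+]$ (a single configuration stands for the singleton). $\mathbf{-1},\mathbf 0,\mathbf{+1}$ are the constant configurations. *)

theory Defs
  imports "HOL-Analysis.Analysis"
begin

type_synonym site = "nat \<times> nat"
type_synonym config = "site \<Rightarrow> int"

definition torus :: "nat \<Rightarrow> site set" where
  "torus L = {0..<L} \<times> {0..<L}"

text \<open>Configurations: spins in {-1,0,1} on the torus (extensional: 0 off the torus).\<close>
definition configs :: "nat \<Rightarrow> config set" where
  "configs L = {\<sigma>. (\<forall>x\<in>torus L. \<sigma> x \<in> {-1,0,1}) \<and> (\<forall>x. x \<notin> torus L \<longrightarrow> \<sigma> x = 0)}"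

definition const_conf :: "nat \<Rightarrow> int \<Rightarrow> config" where
  "const_conf L c = (\<lambda>x. if x \<in> torus L then c else 0)"

text \<open>a + 1 and a - 1 modulo 3 inside {-1,0,1}.\<close>
definition cyc_up :: "int \<Rightarrow> int" where
  "cyc_up a = (if a = -1 then 0 else if a = 0 then 1 else -1)"

definition cyc_down :: "int \<Rightarrow> int" where
  "cyc_down a = (if a = -1 then 1 else if a = 0 then -1 else 0)"

text \<open>flip True x \<sigma> = \<sigma>^{x,+}, flip False x \<sigma> = \<sigma>^{x,-}.\<close>
definition flip :: "bool \<Rightarrow> site \<Rightarrow> config \<Rightarrow> config" where
  "flip s x \<sigma> = \<sigma>(x := (if s then cyc_up (\<sigma> x) else cyc_down (\<sigma> x)))"

text \<open>Hamiltonian; every unordered nearest-neighbour pair {x, x+e_k} is counted once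
  (valid since L \<ge> 3).\<close>
definition ham :: "real \<Rightarrow> nat \<Rightarrow> config \<Rightarrow> real" where
  "ham h L \<sigma> =
     (\<Sum>x\<in>torus L. real_of_int ((\<sigma> ((fst x + 1) mod L, snd x) - \<sigma> x)^2
                              + (\<sigma> (fst x, (snd x + 1) mod L) - \<sigma> x)^2))
     - h * (\<Sum>x\<in>torus L. real_of_int (\<sigma> x))"

definition rate :: "real \<Rightarrow> real \<Rightarrow> nat \<Rightarrow> config \<Rightarrow> config \<Rightarrow> real" where
  "rate \<beta> h L \<sigma> \<sigma>' = exp (- \<beta> * max 0 (ham h L \<sigma>' - ham h L \<sigma>))"

definition lam :: "real \<Rightarrow> real \<Rightarrow> nat \<Rightarrow> config \<Rightarrow> real" where
  "lam \<beta> h L \<sigma> = (\<Sum>x\<in>torus L. \<Sum>s\<in>(UNIV::bool set). rate \<beta> h L \<sigma> (flip s x \<sigma>))"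

definition gibbs :: "real \<Rightarrow> real \<Rightarrow> nat \<Rightarrow> config \<Rightarrow> real" where
  "gibbs \<beta> h L \<sigma> = exp (- \<beta> * ham h L \<sigma>) / (\<Sum>\<tau>\<in>configs L. exp (- \<beta> * ham h L \<tau>))"

text \<open>hitq \<beta> h L A B n \<sigma>: probability that the jump chain started at \<sigma>, within its
  first n jumps, visits B, without having visited A (at jump times \<ge> 1) before.\<close>
primrec hitq :: "real \<Rightarrow> real \<Rightarrow> nat \<Rightarrow> config set \<Rightarrow> config set \<Rightarrow> nat \<Rightarrow> config \<Rightarrow> real" where
  "hitq \<beta> h L A B 0 \<sigma> = 0"
| "hitq \<beta> h L A B (Suc n) \<sigma> =
     (\<Sum>x\<in>torus L. \<Sum>s\<in>(UNIV::bool set).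
        rate \<beta> h L \<sigma> (flip s x \<sigma>) / lam \<beta> h L \<sigma> *
        (if flip s x \<sigma> \<in> B then 1 else if flip s x \<sigma> \<in> A then 0
         else hitq \<beta> h L A B n (flip s x \<sigma>)))"

text \<open>P_\<sigma>[H_B < H_A^+] (continuity from below over the number of jumps).\<close>
definition escape_prob :: "real \<Rightarrow> real \<Rightarrow> nat \<Rightarrow> config set \<Rightarrow> config set \<Rightarrow> config \<Rightarrow> real" where
  "escape_prob \<beta> h L A B \<sigma> = (SUP n. hitq \<beta> h L A B n \<sigma>)"

definition cap :: "real \<Rightarrow> real \<Rightarrow> nat \<Rightarrow> config set \<Rightarrow> config set \<Rightarrow> real" where
  "cap \<beta> h L A B = (\<Sum>\<sigma>\<in>A. gibbs \<beta> h L \<sigma> * lam \<beta> h L \<sigma> * escape_prob \<beta> h L A B \<sigma>)"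

definition n0 :: "real \<Rightarrow> nat" where
  "n0 h = nat \<lfloor>2 / h\<rfloor>"

end

theory Submission
  imports Defs
begin


lemma torus_finite[simp]: "finite (torus L)" by (simp add: torus_def)
lemma card_torus: "card (torus L) = L * L" by (simp add: torus_def)
lemma torus_ne: "0 < L \<Longrightarrow> torus L \<noteq> {}" by (auto simp: torus_def)

lemma configs_finite[simp]: "finite (configs L)"
proof -
  have "configs L = {f. \<forall>x. (x \<in> torus L \<longrightarrow> f x \<in> {-1,0,1}) \<and> (x \<notin> torus L \<longrightarrow> f x = 0)}"
    by (auto simp: configs_def)
  then show ?thesis using finite_set_of_finite_funs[of "torus L" "{-1,0,1::int}" 0] by simp
qed

lemma const_in_configs: "c \<in> {-1,0,1} \<Longrightarrow> const_conf L c \<in> configs L"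
  by (auto simp: configs_def const_conf_def)

lemma flip_configs: "\<sigma> \<in> configs L \<Longrightarrow> y \<in> torus L \<Longrightarrow> flip s y \<sigma> \<in> configs L"
  by (auto simp: configs_def flip_def cyc_up_def cyc_down_def)

lemma flip_flip: "\<sigma> \<in> configs L \<Longrightarrow> y \<in> torus L \<Longrightarrow> flip (\<not> s) y (flip s y \<sigma>) = \<sigma>"
  unfolding flip_def configs_def by (auto simp: cyc_up_def cyc_down_def fun_eq_iff)

lemma rate_pos: "0 < rate \<beta> h L \<sigma> \<sigma>'" by (simp add: rate_def)
lemma rate_le1: "0 \<le> \<beta> \<Longrightarrow> rate \<beta> h L \<sigma> \<sigma>' \<le> 1" by (simp add: rate_def)

lemma lam_pos: "0 < L \<Longrightarrow> 0 < lam \<beta> h L \<sigma>"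
  unfolding lam_def using torus_ne[of L]
  by (intro sum_pos) (auto intro!: sum_pos rate_pos)

lemma lam_le: "0 \<le> \<beta> \<Longrightarrow> lam \<beta> h L \<sigma> \<le> 2 * real (L * L)"
proof -
  assume b: "0 \<le> \<beta>"
  have "lam \<beta> h L \<sigma> \<le> (\<Sum>x\<in>torus L. \<Sum>s\<in>(UNIV::bool set). 1)"
    unfolding lam_def by (intro sum_mono rate_le1[OF b])
  also have "\<dots> = 2 * real (L * L)" by (simp add: card_torus)
  finally show ?thesis .
qed

lemma sum_p: "0 < L \<Longrightarrow> (\<Sum>x\<in>torus L. \<Sum>s\<in>(UNIV::bool set). rate \<beta> h L \<sigma> (flip s x \<sigma>) / lam \<beta> h L \<sigma>) = 1"
proof -
  assume "0 < L"
  then have "lam \<beta> h L \<sigma> > 0" by (rule lam_pos)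
  then show ?thesis unfolding lam_def[symmetric] sum_divide_distrib[symmetric]
    by (simp add: lam_def)
qed

lemma lam_nonneg: "0 \<le> lam \<beta> h L \<sigma>"
  unfolding lam_def by (intro sum_nonneg) (auto intro: less_imp_le[OF rate_pos])

lemma p_nonneg: "0 \<le> rate \<beta> h L \<sigma> \<sigma>' / lam \<beta> h L \<sigma>"
  by (intro divide_nonneg_nonneg lam_nonneg less_imp_le[OF rate_pos])

lemma hitq_nonneg: "0 \<le> hitq \<beta> h L A B n \<sigma>"
proof (induction n arbitrary: \<sigma>)
  case 0 then show ?case by simp
next
  case (Suc n) then show ?case
    unfolding hitq.simps by (intro sum_nonneg mult_nonneg_nonneg p_nonneg) auto
qed

lemma hitq_le1: "0 < L \<Longrightarrow> hitq \<beta> h L A B n \<sigma> \<le> 1"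
proof (induction n arbitrary: \<sigma>)
  case 0 then show ?case by simp
next
  case (Suc n)
  have "hitq \<beta> h L A B (Suc n) \<sigma> \<le> (\<Sum>x\<in>torus L. \<Sum>s\<in>(UNIV::bool set). rate \<beta> h L \<sigma> (flip s x \<sigma>) / lam \<beta> h L \<sigma> * 1)"
    unfolding hitq.simps
    by (intro sum_mono mult_left_mono) (auto simp: Suc less_imp_le[OF rate_pos] less_imp_le[OF lam_pos[OF Suc(2)]])
  also have "\<dots> = 1" using sum_p[OF Suc(2)] by simp
  finally show ?case .
qed

lemma hitq_mono: "hitq \<beta> h L A B n \<sigma> \<le> hitq \<beta> h L A B (Suc n) \<sigma>"
proof (induction n arbitrary: \<sigma>)
  case 0 then show ?case using hitq_nonneg[of _ _ _ _ _ "Suc 0"] by simp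
next
  case (Suc n)
  note e1 = hitq.simps(2)[of \<beta> h L A B "Suc n" \<sigma>]
  note e2 = hitq.simps(2)[of \<beta> h L A B n \<sigma>]
  show ?case
    unfolding e1 e2
    by (intro sum_mono mult_left_mono) (auto simp del: hitq.simps intro: Suc.IH p_nonneg)
qed

lemma hitq_incseq: "incseq (\<lambda>n. hitq \<beta> h L A B n \<sigma>)"
  by (rule incseq_SucI) (rule hitq_mono)

lemma hitq_lim: "0 < L \<Longrightarrow> (\<lambda>n. hitq \<beta> h L A B n \<sigma>) \<longlonglongrightarrow> escape_prob \<beta> h L A B \<sigma>"
  unfolding escape_prob_def
  by (rule LIMSEQ_incseq_SUP[OF _ hitq_incseq]) (auto intro: bdd_aboveI[where M=1] hitq_le1)

lemma esc_nonneg: "0 < L \<Longrightarrow> 0 \<le> escape_prob \<beta> h L A B \<sigma>"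
  by (rule LIMSEQ_le_const[OF hitq_lim]) (auto simp: hitq_nonneg)

lemma esc_le1: "0 < L \<Longrightarrow> escape_prob \<beta> h L A B \<sigma> \<le> 1"
  by (rule LIMSEQ_le_const2[OF hitq_lim]) (auto simp: hitq_le1)

lemma esc_eq: "0 < L \<Longrightarrow> escape_prob \<beta> h L A B \<sigma> =
     (\<Sum>x\<in>torus L. \<Sum>s\<in>(UNIV::bool set).
        rate \<beta> h L \<sigma> (flip s x \<sigma>) / lam \<beta> h L \<sigma> *
        (if flip s x \<sigma> \<in> B then 1 else if flip s x \<sigma> \<in> A then 0
         else escape_prob \<beta> h L A B (flip s x \<sigma>)))"
proof -
  assume L: "0 < L"
  have 1: "(\<lambda>n. hitq \<beta> h L A B (Suc n) \<sigma>) \<longlonglongrightarrow> escape_prob \<beta> h L A B \<sigma>"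
    using hitq_lim[OF L] by (rule LIMSEQ_Suc)
  have 2: "(\<lambda>n. hitq \<beta> h L A B (Suc n) \<sigma>) \<longlonglongrightarrow> (\<Sum>x\<in>torus L. \<Sum>s\<in>(UNIV::bool set).
        rate \<beta> h L \<sigma> (flip s x \<sigma>) / lam \<beta> h L \<sigma> *
        (if flip s x \<sigma> \<in> B then 1 else if flip s x \<sigma> \<in> A then 0
         else escape_prob \<beta> h L A B (flip s x \<sigma>)))"
    unfolding hitq.simps
    by (intro tendsto_sum tendsto_mult tendsto_const) (auto intro: hitq_lim[OF L])
  show ?thesis using LIMSEQ_unique[OF 1 2] .
qed




definition Zp :: "real \<Rightarrow> real \<Rightarrow> nat \<Rightarrow> real" where
  "Zp \<beta> h L = (\<Sum>\<tau>\<in>configs L. exp (- \<beta> * ham h L \<tau>))"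

lemma Zp_pos: "0 < Zp \<beta> h L"
  unfolding Zp_def using const_in_configs[of 0 L]
  by (intro sum_pos) auto

lemma gibbs_pos: "0 < gibbs \<beta> h L \<sigma>"
  using Zp_pos unfolding gibbs_def Zp_def[symmetric] by simp

lemma mu_rate: "gibbs \<beta> h L \<sigma> * rate \<beta> h L \<sigma> \<sigma>' = exp (- \<beta> * max (ham h L \<sigma>) (ham h L \<sigma>')) / Zp \<beta> h L"
proof -
  have "exp (- \<beta> * ham h L \<sigma>) * exp (- \<beta> * max 0 (ham h L \<sigma>' - ham h L \<sigma>)) =
        exp (- \<beta> * max (ham h L \<sigma>) (ham h L \<sigma>'))"
    unfolding exp_add[symmetric] by (simp add: max_def algebra_simps)
  then show ?thesis unfolding gibbs_def rate_def Zp_def[symmetric] by simp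
qed

lemma mu_rate_sym: "gibbs \<beta> h L \<sigma> * rate \<beta> h L \<sigma> \<sigma>' = gibbs \<beta> h L \<sigma>' * rate \<beta> h L \<sigma>' \<sigma>"
  unfolding mu_rate by (simp add: max.commute)

definition iota :: "config \<times> site \<times> bool \<Rightarrow> config \<times> site \<times> bool" where
  "iota t = (case t of (\<sigma>, y, s) \<Rightarrow> (flip s y \<sigma>, y, \<not> s))"

abbreviation TT :: "nat \<Rightarrow> (config \<times> site \<times> bool) set" where
  "TT L \<equiv> configs L \<times> torus L \<times> (UNIV :: bool set)"

lemma iota_bij: "bij_betw iota (TT L) (TT L)"
  by (rule bij_betw_byWitness[where f' = iota])
     (auto simp: iota_def flip_flip flip_configs)

lemma sum_iota: "(\<Sum>t\<in>TT L. F t) = (\<Sum>t\<in>TT L. F (iota t))"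
  using sum.reindex_bij_betw[OF iota_bij, of F] by simp

lemma sumT: "(\<Sum>t\<in>TT L. f t) = (\<Sum>\<sigma>\<in>configs L. \<Sum>y\<in>torus L. \<Sum>s\<in>(UNIV::bool set). f (\<sigma>, y, s))"
  by (simp add: sum.cartesian_product split_def)

lemma dirichlet:
  fixes g :: "config \<Rightarrow> real"
  assumes a: "a \<in> configs L" and b: "b \<in> configs L" and ab: "a \<noteq> b"
    and ga: "g a = 0" and gb: "g b = 1"
    and harm: "\<And>\<sigma>. \<sigma> \<in> configs L \<Longrightarrow> \<sigma> \<noteq> a \<Longrightarrow> \<sigma> \<noteq> b \<Longrightarrow>
        (\<Sum>y\<in>torus L. \<Sum>s\<in>(UNIV::bool set). rate \<beta> h L \<sigma> (flip s y \<sigma>) * (g (flip s y \<sigma>) - g \<sigma>)) = 0"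
  shows "(\<Sum>\<sigma>\<in>configs L. \<Sum>y\<in>torus L. \<Sum>s\<in>(UNIV::bool set).
            gibbs \<beta> h L \<sigma> * rate \<beta> h L \<sigma> (flip s y \<sigma>) * (g (flip s y \<sigma>) - g \<sigma>)^2)
       = 2 * (\<Sum>y\<in>torus L. \<Sum>s\<in>(UNIV::bool set). gibbs \<beta> h L a * rate \<beta> h L a (flip s y a) * g (flip s y a))"
proof -
  define W where "W t = (case t of (\<sigma>, y, s) \<Rightarrow> gibbs \<beta> h L \<sigma> * rate \<beta> h L \<sigma> (flip s y \<sigma>))" for t
  define D where "D t = (case t of (\<sigma>, y, s) \<Rightarrow> g (flip s y \<sigma>) - g \<sigma>)" for t
  define G1 where "G1 t = (case t of (\<sigma>, y, s) \<Rightarrow> g (flip s y \<sigma>))" for t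
  define G0 where "G0 t = (case t of (\<sigma>, y, s) :: config \<times> site \<times> bool \<Rightarrow> g \<sigma>)" for t
  have Wi: "W (iota t) = W t" if "t \<in> TT L" for t
    using that by (auto simp: W_def iota_def flip_flip mu_rate_sym)
  have Di: "D (iota t) = - D t" if "t \<in> TT L" for t
    using that by (auto simp: D_def iota_def flip_flip)
  have G1i: "G1 (iota t) = G0 t" if "t \<in> TT L" for t
    using that by (auto simp: G1_def G0_def iota_def flip_flip)
  have DG: "D t = G1 t - G0 t" for t by (auto simp: D_def G1_def G0_def split: prod.splits)
  have A: "(\<Sum>t\<in>TT L. W t * D t) = 0"
  proof -
    have "(\<Sum>t\<in>TT L. W t * D t) = (\<Sum>t\<in>TT L. W (iota t) * D (iota t))" by (rule sum_iota)
    also have "\<dots> = - (\<Sum>t\<in>TT L. W t * D t)"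
      by (simp add: sum_negf[symmetric] Wi Di cong: sum.cong)
    finally show ?thesis by simp
  qed
  have B: "(\<Sum>t\<in>TT L. W t * D t * G1 t) = - (\<Sum>t\<in>TT L. W t * D t * G0 t)"
  proof -
    have "(\<Sum>t\<in>TT L. W t * D t * G1 t) = (\<Sum>t\<in>TT L. W (iota t) * D (iota t) * G1 (iota t))" by (rule sum_iota)
    also have "\<dots> = - (\<Sum>t\<in>TT L. W t * D t * G0 t)"
      by (simp add: sum_negf[symmetric] Wi Di G1i cong: sum.cong)
    finally show ?thesis .
  qed
  have S: "(\<Sum>t\<in>TT L. W t * (D t)^2) = -2 * (\<Sum>t\<in>TT L. W t * D t * G0 t)"
  proof -
    have "(\<Sum>t\<in>TT L. W t * (D t)^2) = (\<Sum>t\<in>TT L. W t * D t * G1 t) - (\<Sum>t\<in>TT L. W t * D t * G0 t)"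
      unfolding sum_subtractf[symmetric] by (rule sum.cong) (auto simp: power2_eq_square DG algebra_simps)
    then show ?thesis using B by simp
  qed
  define I where "I \<sigma> = (\<Sum>y\<in>torus L. \<Sum>s\<in>(UNIV::bool set). rate \<beta> h L \<sigma> (flip s y \<sigma>) * (g (flip s y \<sigma>) - g \<sigma>))" for \<sigma>
  have I0: "I \<sigma> = 0" if "\<sigma> \<in> configs L" "\<sigma> \<noteq> a" "\<sigma> \<noteq> b" for \<sigma>
    using harm[OF that] unfolding I_def .
  have two: "(\<Sum>\<sigma>\<in>configs L. F \<sigma> * I \<sigma>) = F a * I a + F b * I b" for F
  proof -
    have "(\<Sum>\<sigma>\<in>configs L. F \<sigma> * I \<sigma>) = (\<Sum>\<sigma>\<in>{a,b}. F \<sigma> * I \<sigma>)"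
      by (rule sum.mono_neutral_right) (auto simp: a b I0)
    then show ?thesis using ab by simp
  qed
  have A': "(\<Sum>t\<in>TT L. W t * D t) = (\<Sum>\<sigma>\<in>configs L. gibbs \<beta> h L \<sigma> * I \<sigma>)"
    unfolding sumT I_def sum_distrib_left by (simp add: W_def D_def mult.assoc)
  have C': "(\<Sum>t\<in>TT L. W t * D t * G0 t) = (\<Sum>\<sigma>\<in>configs L. (gibbs \<beta> h L \<sigma> * g \<sigma>) * I \<sigma>)"
    unfolding sumT I_def sum_distrib_left by (rule sum.cong[OF refl])+ (simp add: W_def D_def G0_def mult_ac)
  have S': "(\<Sum>t\<in>TT L. W t * (D t)^2) = (\<Sum>\<sigma>\<in>configs L. \<Sum>y\<in>torus L. \<Sum>s\<in>(UNIV::bool set).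
            gibbs \<beta> h L \<sigma> * rate \<beta> h L \<sigma> (flip s y \<sigma>) * (g (flip s y \<sigma>) - g \<sigma>)^2)"
    unfolding sumT W_def D_def by simp
  have e1: "gibbs \<beta> h L a * I a + gibbs \<beta> h L b * I b = 0" using A A' two[of "gibbs \<beta> h L"] by simp
  have e2: "(\<Sum>t\<in>TT L. W t * D t * G0 t) = gibbs \<beta> h L b * I b" using C' two[of "\<lambda>\<sigma>. gibbs \<beta> h L \<sigma> * g \<sigma>"] ga gb by simp
  have Ia: "gibbs \<beta> h L a * I a = (\<Sum>y\<in>torus L. \<Sum>s\<in>(UNIV::bool set). gibbs \<beta> h L a * rate \<beta> h L a (flip s y a) * g (flip s y a))"
    unfolding I_def ga by (simp add: sum_distrib_left mult_ac)
  show ?thesis using S S' e1 e2 Ia by linarith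
qed




lemma cs_path:
  fixes c d :: "nat \<Rightarrow> real"
  assumes "\<And>i. i < k \<Longrightarrow> 0 < c i"
  shows "(\<Sum>i<k. d i)^2 \<le> (\<Sum>i<k. c i * (d i)^2) * (\<Sum>i<k. 1 / c i)"
proof -
  have "(\<Sum>i<k. d i) = (\<Sum>i<k. (sqrt (c i) * d i) * (1 / sqrt (c i)))"
    by (rule sum.cong) (use assms in force)+
  then have "(\<Sum>i<k. d i)^2 \<le> (\<Sum>i<k. (sqrt (c i) * d i)^2) * (\<Sum>i<k. (1 / sqrt (c i))^2)"
    using Cauchy_Schwarz_ineq_sum by metis
  also have "(\<Sum>i<k. (sqrt (c i) * d i)^2) = (\<Sum>i<k. c i * (d i)^2)"
    by (rule sum.cong) (use assms in \<open>auto simp: power_mult_distrib less_imp_le\<close>)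
  also have "(\<Sum>i<k. (1 / sqrt (c i))^2) = (\<Sum>i<k. 1 / c i)"
    by (rule sum.cong) (use assms in \<open>auto simp: power_divide less_imp_le\<close>)
  finally show ?thesis .
qed

lemma path_bound:
  fixes g :: "config \<Rightarrow> real" and \<sigma> :: "nat \<Rightarrow> config" and y :: "nat \<Rightarrow> site" and s :: "nat \<Rightarrow> bool"
  assumes s0: "\<sigma> 0 \<in> configs L"
    and steps: "\<And>i. i < k \<Longrightarrow> y i \<in> torus L \<and> \<sigma> (Suc i) = flip (s i) (y i) (\<sigma> i)"
    and inj: "inj_on \<sigma> {..<k}"
  shows "(g (\<sigma> k) - g (\<sigma> 0))^2 \<le>
    (\<Sum>\<tau>\<in>configs L. \<Sum>x\<in>torus L. \<Sum>t\<in>(UNIV::bool set).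
            gibbs \<beta> h L \<tau> * rate \<beta> h L \<tau> (flip t x \<tau>) * (g (flip t x \<tau>) - g \<tau>)^2)
    * (\<Sum>i<k. 1 / (gibbs \<beta> h L (\<sigma> i) * rate \<beta> h L (\<sigma> i) (\<sigma> (Suc i))))"
proof -
  have inc: "\<sigma> i \<in> configs L" if "i \<le> k" for i
    using that
  proof (induction i)
    case 0 then show ?case using s0 by simp
  next
    case (Suc i) then show ?case using steps[of i] flip_configs by auto
  qed
  define c where "c i = gibbs \<beta> h L (\<sigma> i) * rate \<beta> h L (\<sigma> i) (\<sigma> (Suc i))" for i
  define d where "d i = g (\<sigma> (Suc i)) - g (\<sigma> i)" for i
  define F where "F t = (case t of (\<tau>, x, u) \<Rightarrow> gibbs \<beta> h L \<tau> * rate \<beta> h L \<tau> (flip u x \<tau>) * (g (flip u x \<tau>) - g \<tau>)^2)" for t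
  define tr where "tr i = (\<sigma> i, y i, s i)" for i
  have cpos: "0 < c i" for i unfolding c_def by (intro mult_pos_pos gibbs_pos rate_pos)
  have Fnn: "0 \<le> F t" for t unfolding F_def
    by (auto split: prod.splits intro!: mult_nonneg_nonneg less_imp_le[OF gibbs_pos] less_imp_le[OF rate_pos])
  have injtr: "inj_on tr {..<k}" using inj unfolding inj_on_def tr_def by auto
  have sub: "tr ` {..<k} \<subseteq> TT L" using inc steps unfolding tr_def by auto
  have "(\<Sum>i<k. c i * (d i)^2) = (\<Sum>i<k. F (tr i))"
    by (rule sum.cong) (auto simp: c_def d_def F_def tr_def steps)
  also have "\<dots> = (\<Sum>t\<in>tr ` {..<k}. F t)" using sum.reindex[OF injtr, of F] by simp
  also have "\<dots> \<le> (\<Sum>t\<in>TT L. F t)" by (rule sum_mono2) (use sub Fnn in auto)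
  also have "\<dots> = (\<Sum>\<tau>\<in>configs L. \<Sum>x\<in>torus L. \<Sum>t\<in>(UNIV::bool set).
            gibbs \<beta> h L \<tau> * rate \<beta> h L \<tau> (flip t x \<tau>) * (g (flip t x \<tau>) - g \<tau>)^2)"
    unfolding sumT F_def by simp
  finally have le: "(\<Sum>i<k. c i * (d i)^2) \<le> \<dots>" .
  have tel: "(\<Sum>i<k. d i) = g (\<sigma> k) - g (\<sigma> 0)"
    unfolding d_def by (rule sum_lessThan_telescope)
  have "(g (\<sigma> k) - g (\<sigma> 0))^2 \<le> (\<Sum>i<k. c i * (d i)^2) * (\<Sum>i<k. 1 / c i)"
    unfolding tel[symmetric] by (rule cs_path) (simp add: cpos)
  also have "\<dots> \<le> (\<Sum>\<tau>\<in>configs L. \<Sum>x\<in>torus L. \<Sum>t\<in>(UNIV::bool set).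
            gibbs \<beta> h L \<tau> * rate \<beta> h L \<tau> (flip t x \<tau>) * (g (flip t x \<tau>) - g \<tau>)^2) * (\<Sum>i<k. 1 / c i)"
    by (rule mult_right_mono[OF le]) (auto intro!: sum_nonneg simp: cpos less_imp_le)
  finally show ?thesis unfolding c_def .
qed




lemma cnt_t:
  assumes L: "0 < L"
  shows "(\<Sum>j<L. of_bool ((Suc j mod L < t) \<noteq> (j < t)) :: real) \<le> 2"
    and "t = 0 \<or> L \<le> t \<Longrightarrow> (\<Sum>j<L. of_bool ((Suc j mod L < t) \<noteq> (j < t)) :: real) = 0"
proof -
  have split: "{..<L} = insert (L - 1) {..<L - 1}" using L by auto
  have inner: "(\<Sum>j<L - 1. of_bool ((Suc j mod L < t) \<noteq> (j < t)) :: real) = (\<Sum>j<L - 1. if j = t - 1 \<and> 0 < t then 1 else 0)"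
    by (rule sum.cong) auto
  have inner2: "(\<Sum>j<L - 1. if j = t - 1 \<and> 0 < t then 1 else 0 :: real) = (if t - 1 < L - 1 \<and> 0 < t then 1 else 0)"
  proof (cases "0 < t")
    case True then show ?thesis by (simp add: sum.delta')
  next
    case False then show ?thesis by simp
  qed
  have last: "Suc (L - 1) mod L = 0" using L by simp
  have tot: "(\<Sum>j<L. of_bool ((Suc j mod L < t) \<noteq> (j < t)) :: real) =
     of_bool ((0 < t) \<noteq> (L - 1 < t)) + (if t - 1 < L - 1 \<and> 0 < t then 1 else 0)"
  proof -
    have "(\<Sum>j<L. of_bool ((Suc j mod L < t) \<noteq> (j < t)) :: real) =
      of_bool ((Suc (L - 1) mod L < t) \<noteq> (L - 1 < t)) + (\<Sum>j<L - 1. of_bool ((Suc j mod L < t) \<noteq> (j < t)))"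
      unfolding split by (subst sum.insert) auto
    then show ?thesis unfolding inner inner2 last .
  qed
  show "(\<Sum>j<L. of_bool ((Suc j mod L < t) \<noteq> (j < t)) :: real) \<le> 2" unfolding tot by auto
  show "t = 0 \<or> L \<le> t \<Longrightarrow> (\<Sum>j<L. of_bool ((Suc j mod L < t) \<noteq> (j < t)) :: real) = 0"
    unfolding tot using L by auto
qed

definition rp :: "nat \<Rightarrow> int \<Rightarrow> int \<Rightarrow> nat \<Rightarrow> config" where
  "rp L a b m = (\<lambda>x. if x \<in> torus L then (if snd x * L + fst x < m then b else a) else 0)"

definition rs :: "nat \<Rightarrow> nat \<Rightarrow> site" where
  "rs L m = (m mod L, m div L)"

lemma rp_0: "rp L a b 0 = const_conf L a"
  by (simp add: rp_def const_conf_def fun_eq_iff)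

lemma rp_end: "rp L a b (L * L) = const_conf L b"
proof -
  have "snd x * L + fst x < L * L" if "x \<in> torus L" for x
  proof -
    from that have "fst x < L" "snd x < L" by (auto simp: torus_def)
    then have "snd x * L + fst x < snd x * L + L" by simp
    also have "\<dots> = Suc (snd x) * L" by simp
    also have "\<dots> \<le> L * L" by (rule mult_le_mono1) (use \<open>snd x < L\<close> in simp)
    finally show ?thesis .
  qed
  then show ?thesis by (auto simp: rp_def const_conf_def fun_eq_iff)
qed

lemma rs_torus: "m < L * L \<Longrightarrow> rs L m \<in> torus L"
  using div_less_iff_less_mult[of L m L]
  by (cases "L = 0") (auto simp: rs_def torus_def)

lemma rank_rs: "0 < L \<Longrightarrow> snd (rs L m) * L + fst (rs L m) = m"
  by (simp add: rs_def)

lemma rank_inj: "x \<in> torus L \<Longrightarrow> snd x * L + fst x = m \<Longrightarrow> x = rs L m"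
proof -
  assume x: "x \<in> torus L" and r: "snd x * L + fst x = m"
  from x have lt: "fst x < L" by (auto simp: torus_def)
  have "m div L = snd x" using r lt by (auto intro!: div_nat_eqI)
  moreover have "m mod L = fst x" using r lt by auto
  ultimately show ?thesis by (simp add: rs_def prod_eq_iff)
qed

lemma rp_step:
  assumes L: "m < L * L" and ab: "a \<in> {-1,0,1}" "b \<in> {-1,0,1}" "a \<noteq> b"
  shows "rp L a b (Suc m) = flip (cyc_up a = b) (rs L m) (rp L a b m)"
proof -
  have L0: "0 < L" using L by (cases L) auto
  have y: "rp L a b m (rs L m) = a" using rs_torus[OF L] rank_rs[OF L0, of m] by (simp add: rp_def)
  have cyc: "(if cyc_up a = b then cyc_up a else cyc_down a) = b"
    using ab by (auto simp: cyc_up_def cyc_down_def)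
  show ?thesis
    unfolding flip_def y cyc
  proof (rule ext)
    fix x
    show "rp L a b (Suc m) x = fun_upd (rp L a b m) (rs L m) b x"
    proof (cases "x = rs L m")
      case True then show ?thesis using rs_torus[OF L] rank_rs[OF L0, of m] by (simp add: rp_def)
    next
      case False
      then have "snd x * L + fst x \<noteq> m" if "x \<in> torus L" using rank_inj that by blast
      then show ?thesis using False by (auto simp: rp_def)
    qed
  qed
qed

lemma rp_inj: "k \<le> L * L \<Longrightarrow> inj_on (rp L a b) {..<k}" if "a \<noteq> b" for k
proof (rule inj_onI, rule ccontr)
  fix m1 m2 assume k: "k \<le> L * L" and m: "m1 \<in> {..<k}" "m2 \<in> {..<k}" and e: "rp L a b m1 = rp L a b m2" and ne: "m1 \<noteq> m2"
  have L0: "0 < L" using m k by (cases L) auto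
  have gen: "rp L a b p \<noteq> rp L a b q" if "p < q" "q \<le> L * L" for p q
  proof -
    have "rp L a b p (rs L p) = a" "rp L a b q (rs L p) = b"
      using rs_torus[of p L] rank_rs[OF L0, of p] that by (auto simp: rp_def)
    then show ?thesis using \<open>a \<noteq> b\<close> by auto
  qed
  show False
  proof (cases "m1 < m2")
    case True then show ?thesis using gen[of m1 m2] e m k by auto
  next
    case False then show ?thesis using gen[of m2 m1] e m k ne by auto
  qed
qed

lemma ham_const: "ham h L (const_conf L c) = - h * c * real (L * L)"
proof -
  have "((fst x + 1) mod L, snd x) \<in> torus L \<and> (fst x, (snd x + 1) mod L) \<in> torus L" if "x \<in> torus L" for x
    using that by (auto simp: torus_def)
  then have "ham h L (const_conf L c) = - h * (\<Sum>x\<in>torus L. real_of_int c)"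
    unfolding ham_def const_conf_def by (simp cong: sum.cong)
  then show ?thesis by (simp add: card_torus)
qed

lemma sum_torus: "(\<Sum>x\<in>torus L. f x) = (\<Sum>i<L. \<Sum>j<L. f (i, j))"
  by (simp add: torus_def sum.cartesian_product atLeast0LessThan)

lemma ham_rp:
  assumes L: "0 < L" and h: "0 \<le> h"
  shows "ham h L (rp L 0 1 m) \<le> 2 * real L + 2"
proof -
  let ?s = "rp L 0 1 m"
  have nonneg: "0 \<le> (\<Sum>x\<in>torus L. real_of_int (?s x))"
    by (intro sum_nonneg) (auto simp: rp_def)
  have val: "?s (i, j) = of_bool (j * L + i < m)" if "i < L" "j < L" for i j
    using that by (simp add: rp_def torus_def)
  have md: "Suc i mod L < L" for i using L by simp
  have r1: "(\<Sum>i<L. real_of_int ((?s ((i + 1) mod L, j) - ?s (i, j))^2)) = (\<Sum>i<L. of_bool ((Suc i mod L < m - j * L) \<noteq> (i < m - j * L)))"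
    if "j < L" for j
  proof (rule sum.cong[OF refl])
    fix i assume "i \<in> {..<L}"
    then show "real_of_int ((?s ((i + 1) mod L, j) - ?s (i, j))^2) = of_bool ((Suc i mod L < m - j * L) \<noteq> (i < m - j * L))"
      using val[of i j] val[of "Suc i mod L" j] md[of i] that by (auto simp: less_diff_conv)
  qed
  have rowb: "(\<Sum>i<L. of_bool ((Suc i mod L < m - j * L) \<noteq> (i < m - j * L)) :: real) \<le> (if j = m div L then 2 else 0)" for j
  proof (cases "j = m div L")
    case True then show ?thesis using cnt_t(1)[OF L] by simp
  next
    case False
    have "m - j * L = 0 \<or> L \<le> m - j * L"
    proof (rule ccontr)
      assume "\<not> (m - j * L = 0 \<or> L \<le> m - j * L)"
      then have "L * j \<le> m" "m < L * Suc j" by (auto simp: mult.commute)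
      then have "m div L = j" by (rule div_nat_eqI)
      then show False using False by simp
    qed
    then show ?thesis using cnt_t(2)[OF L] False by simp
  qed
  have part1: "(\<Sum>x\<in>torus L. real_of_int ((?s ((fst x + 1) mod L, snd x) - ?s x)^2)) \<le> 2"
  proof -
    have "(\<Sum>x\<in>torus L. real_of_int ((?s ((fst x + 1) mod L, snd x) - ?s x)^2))
        = (\<Sum>j<L. \<Sum>i<L. real_of_int ((?s ((i + 1) mod L, j) - ?s (i, j))^2))"
      unfolding sum_torus fst_conv snd_conv by (rule sum.swap)
    also have "\<dots> = (\<Sum>j<L. \<Sum>i<L. of_bool ((Suc i mod L < m - j * L) \<noteq> (i < m - j * L)))"
      by (intro sum.cong refl r1) simp
    also have "\<dots> \<le> (\<Sum>j<L. if j = m div L then 2 else 0)"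
      by (rule sum_mono) (rule rowb)
    also have "\<dots> \<le> 2" by (simp add: sum.delta')
    finally show ?thesis .
  qed
  have colt: "(j * L + i < m) = (j < (m + (L - 1 - i)) div L)" if "i < L" for i j
  proof -
    have "(j < (m + (L - 1 - i)) div L) = (Suc j * L \<le> m + (L - 1 - i))"
      by (subst Suc_le_eq[symmetric]) (rule less_eq_div_iff_mult_less_eq[OF L])
    also have "\<dots> = (j * L + i < m)" using that by auto
    finally show ?thesis by simp
  qed
  have c1: "(\<Sum>j<L. real_of_int ((?s (i, (j + 1) mod L) - ?s (i, j))^2)) \<le> 2" if "i < L" for i
  proof -
    have "(\<Sum>j<L. real_of_int ((?s (i, (j + 1) mod L) - ?s (i, j))^2)) =
       (\<Sum>j<L. of_bool ((Suc j mod L < (m + (L - 1 - i)) div L) \<noteq> (j < (m + (L - 1 - i)) div L)))"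
    proof (rule sum.cong[OF refl])
      fix j assume "j \<in> {..<L}"
      then show "real_of_int ((?s (i, (j + 1) mod L) - ?s (i, j))^2) = of_bool ((Suc j mod L < (m + (L - 1 - i)) div L) \<noteq> (j < (m + (L - 1 - i)) div L))"
        using val[of i j] val[of i "Suc j mod L"] md[of j] that colt[OF that, of j] colt[OF that, of "Suc j mod L"] by auto
    qed
    also have "\<dots> \<le> 2" by (rule cnt_t(1)[OF L])
    finally show ?thesis .
  qed
  have part2: "(\<Sum>x\<in>torus L. real_of_int ((?s (fst x, (snd x + 1) mod L) - ?s x)^2)) \<le> 2 * real L"
  proof -
    have "(\<Sum>x\<in>torus L. real_of_int ((?s (fst x, (snd x + 1) mod L) - ?s x)^2))
        = (\<Sum>i<L. \<Sum>j<L. real_of_int ((?s (i, (j + 1) mod L) - ?s (i, j))^2))"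
      unfolding sum_torus by simp
    also have "\<dots> \<le> (\<Sum>i<L. 2)" by (intro sum_mono c1) simp
    finally show ?thesis by simp
  qed
  have "ham h L ?s = (\<Sum>x\<in>torus L. real_of_int ((?s ((fst x + 1) mod L, snd x) - ?s x)^2))
     + (\<Sum>x\<in>torus L. real_of_int ((?s (fst x, (snd x + 1) mod L) - ?s x)^2))
     - h * (\<Sum>x\<in>torus L. real_of_int (?s x))"
    unfolding ham_def by (simp add: sum.distrib)
  then show ?thesis using part1 part2 nonneg h mult_nonneg_nonneg[OF h nonneg] by linarith
qed




context
  fixes \<beta> h :: real and L :: nat
  assumes L0: "0 < L" and bpos: "0 < \<beta>"
begin

abbreviation "m1 \<equiv> const_conf L (-1)"
abbreviation "zz \<equiv> const_conf L 0"
abbreviation "pp \<equiv> const_conf L 1"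
abbreviation "e1 \<equiv> escape_prob \<beta> h L {m1} {pp}"
abbreviation "e2 \<equiv> escape_prob \<beta> h L {m1} {zz, pp}"
abbreviation "P \<sigma> \<sigma>' \<equiv> rate \<beta> h L \<sigma> \<sigma>' / lam \<beta> h L \<sigma>"

definition gg :: "config \<Rightarrow> real" where
  "gg \<sigma> = (if \<sigma> = pp then 1 else if \<sigma> = m1 then 0 else e1 \<sigma>)"

lemma distinct3: "m1 \<noteq> zz" "m1 \<noteq> pp" "zz \<noteq> pp"
proof -
  have t: "(0,0) \<in> torus L" using L0 by (simp add: torus_def)
  show "m1 \<noteq> zz" "m1 \<noteq> pp" "zz \<noteq> pp"
    using t by (auto simp: const_conf_def fun_eq_iff dest!: spec[of _ "(0,0)"])
qed

lemma gg_range: "0 \<le> gg \<sigma>" "gg \<sigma> \<le> 1"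
  unfolding gg_def using esc_nonneg[OF L0] esc_le1[OF L0] by auto

lemma e1_eq: "e1 \<sigma> = (\<Sum>x\<in>torus L. \<Sum>s\<in>(UNIV::bool set). P \<sigma> (flip s x \<sigma>) * gg (flip s x \<sigma>))"
  by (subst esc_eq[OF L0]) (simp only: gg_def singleton_iff)

lemma e2_eq: "e2 \<sigma> = (\<Sum>x\<in>torus L. \<Sum>s\<in>(UNIV::bool set). P \<sigma> (flip s x \<sigma>) *
   (if flip s x \<sigma> \<in> {zz, pp} then 1 else if flip s x \<sigma> \<in> {m1} then 0 else e2 (flip s x \<sigma>)))"
  by (rule esc_eq[OF L0])

lemma sum_rate_gg: "(\<Sum>x\<in>torus L. \<Sum>s\<in>(UNIV::bool set). rate \<beta> h L \<sigma> (flip s x \<sigma>) * gg (flip s x \<sigma>))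
   = lam \<beta> h L \<sigma> * e1 \<sigma>"
proof -
  have l: "lam \<beta> h L \<sigma> \<noteq> 0" using lam_pos[OF L0] by (metis less_irrefl)
  show ?thesis unfolding e1_eq sum_distrib_left
    by (intro sum.cong refl) (simp add: l)
qed

lemma harm: "\<sigma> \<noteq> m1 \<Longrightarrow> \<sigma> \<noteq> pp \<Longrightarrow>
   (\<Sum>y\<in>torus L. \<Sum>s\<in>(UNIV::bool set). rate \<beta> h L \<sigma> (flip s y \<sigma>) * (gg (flip s y \<sigma>) - gg \<sigma>)) = 0"
proof -
  assume a: "\<sigma> \<noteq> m1" "\<sigma> \<noteq> pp"
  have "(\<Sum>y\<in>torus L. \<Sum>s\<in>(UNIV::bool set). rate \<beta> h L \<sigma> (flip s y \<sigma>) * (gg (flip s y \<sigma>) - gg \<sigma>))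
     = (\<Sum>y\<in>torus L. \<Sum>s\<in>(UNIV::bool set). rate \<beta> h L \<sigma> (flip s y \<sigma>) * gg (flip s y \<sigma>))
       - (\<Sum>y\<in>torus L. \<Sum>s\<in>(UNIV::bool set). rate \<beta> h L \<sigma> (flip s y \<sigma>)) * gg \<sigma>"
    by (simp add: sum_subtractf sum_distrib_right right_diff_distrib)
  also have "\<dots> = 0" unfolding sum_rate_gg lam_def[symmetric] using a by (simp add: gg_def)
  finally show ?thesis .
qed

abbreviation "SS \<equiv> (\<Sum>\<tau>\<in>configs L. \<Sum>x\<in>torus L. \<Sum>t\<in>(UNIV::bool set).
            gibbs \<beta> h L \<tau> * rate \<beta> h L \<tau> (flip t x \<tau>) * (gg (flip t x \<tau>) - gg \<tau>)^2)"

lemma SS_eq: "SS = 2 * gibbs \<beta> h L m1 * lam \<beta> h L m1 * e1 m1"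
proof -
  have "SS = 2 * (\<Sum>y\<in>torus L. \<Sum>s\<in>(UNIV::bool set). gibbs \<beta> h L m1 * rate \<beta> h L m1 (flip s y m1) * gg (flip s y m1))"
    by (rule dirichlet[where b = pp]) (use distinct3 const_in_configs harm in \<open>auto simp: gg_def\<close>)
  also have "\<dots> = 2 * gibbs \<beta> h L m1 * (\<Sum>y\<in>torus L. \<Sum>s\<in>(UNIV::bool set). rate \<beta> h L m1 (flip s y m1) * gg (flip s y m1))"
    by (simp add: sum_distrib_left mult.assoc)
  also have "\<dots> = 2 * gibbs \<beta> h L m1 * lam \<beta> h L m1 * e1 m1" unfolding sum_rate_gg by simp
  finally show ?thesis .
qed

lemma path_rp:
  assumes "a \<in> {-1,0,1}" "b \<in> {-1,0,1}" "a \<noteq> b"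
  shows "(gg (const_conf L b) - gg (const_conf L a))^2 \<le> SS *
    (\<Sum>i<L*L. 1 / (gibbs \<beta> h L (rp L a b i) * rate \<beta> h L (rp L a b i) (rp L a b (Suc i))))"
proof -
  have "(gg (rp L a b (L*L)) - gg (rp L a b 0))^2 \<le> SS *
    (\<Sum>i<L*L. 1 / (gibbs \<beta> h L (rp L a b i) * rate \<beta> h L (rp L a b i) (rp L a b (Suc i))))"
    by (rule path_bound[where y = "rs L" and s = "\<lambda>_. cyc_up a = b"])
       (use assms in \<open>auto simp: rp_0 const_in_configs rs_torus rp_step intro: rp_inj\<close>)
  then show ?thesis unfolding rp_0 rp_end .
qed

lemma e1_pos: "0 < e1 m1"
proof -
  have "(gg pp - gg m1)^2 \<le> SS * (\<Sum>i<L*L. 1 / (gibbs \<beta> h L (rp L (-1) 1 i) * rate \<beta> h L (rp L (-1) 1 i) (rp L (-1) 1 (Suc i))))"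
    by (rule path_rp) auto
  then have "1 \<le> SS * (\<Sum>i<L*L. 1 / (gibbs \<beta> h L (rp L (-1) 1 i) * rate \<beta> h L (rp L (-1) 1 i) (rp L (-1) 1 (Suc i))))"
    using distinct3 by (simp add: gg_def)
  then have "SS \<noteq> 0" by auto
  then have "e1 m1 \<noteq> 0" unfolding SS_eq by auto
  then show ?thesis using esc_nonneg[OF L0, of \<beta> h "{m1}" "{pp}" m1] by simp
qed

lemma e1_le_e2: "e1 \<sigma> \<le> e2 \<sigma>"
proof -
  have "hitq \<beta> h L {m1} {pp} n \<tau> \<le> hitq \<beta> h L {m1} {zz, pp} n \<tau>" for n \<tau>
  proof (induction n arbitrary: \<tau>)
    case 0 then show ?case by simp
  next
    case (Suc n)
    show ?case unfolding hitq.simps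
      by (intro sum_mono mult_left_mono p_nonneg)
         (use distinct3 hitq_le1[OF L0] Suc.IH in auto)
  qed
  then show ?thesis by (intro LIMSEQ_le[OF hitq_lim[OF L0] hitq_lim[OF L0]]) auto
qed

lemma lower: "gg zz * e2 m1 \<le> e1 m1"
proof -
  have step: "gg zz * hitq \<beta> h L {m1} {zz, pp} (Suc n) \<sigma> \<le> e1 \<sigma>"
    if IH: "\<And>\<tau>. \<tau> \<in> configs L \<Longrightarrow> \<tau> \<notin> {m1, zz, pp} \<Longrightarrow> gg zz * hitq \<beta> h L {m1} {zz, pp} n \<tau> \<le> gg \<tau>"
      and s: "\<sigma> \<in> configs L" for n \<sigma>
  proof -
    have "gg zz * hitq \<beta> h L {m1} {zz, pp} (Suc n) \<sigma> =
      (\<Sum>x\<in>torus L. \<Sum>s\<in>(UNIV::bool set). P \<sigma> (flip s x \<sigma>) * (gg zz *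
        (if flip s x \<sigma> \<in> {zz, pp} then 1 else if flip s x \<sigma> \<in> {m1} then 0 else hitq \<beta> h L {m1} {zz, pp} n (flip s x \<sigma>))))"
      unfolding hitq.simps sum_distrib_left by (simp add: mult_ac)
    also have "\<dots> \<le> (\<Sum>x\<in>torus L. \<Sum>s\<in>(UNIV::bool set). P \<sigma> (flip s x \<sigma>) * gg (flip s x \<sigma>))"
    proof (intro sum_mono mult_left_mono p_nonneg)
      fix x s assume x: "x \<in> torus L"
      have fc: "flip s x \<sigma> \<in> configs L" using flip_configs[OF s x] .
      show "gg zz * (if flip s x \<sigma> \<in> {zz, pp} then 1 else if flip s x \<sigma> \<in> {m1} then 0 else hitq \<beta> h L {m1} {zz, pp} n (flip s x \<sigma>))
         \<le> gg (flip s x \<sigma>)"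
        using IH[OF fc] gg_range[of zz] distinct3 by (auto simp: gg_def)
    qed
    also have "\<dots> = e1 \<sigma>" by (rule e1_eq[symmetric])
    finally show ?thesis .
  qed
  have ind: "\<tau> \<in> configs L \<Longrightarrow> \<tau> \<notin> {m1, zz, pp} \<Longrightarrow> gg zz * hitq \<beta> h L {m1} {zz, pp} n \<tau> \<le> gg \<tau>" for n \<tau>
  proof (induction n arbitrary: \<tau>)
    case 0 then show ?case using gg_range by simp
  next
    case (Suc n)
    have "gg zz * hitq \<beta> h L {m1} {zz, pp} (Suc n) \<tau> \<le> e1 \<tau>" by (rule step[OF Suc.IH Suc.prems(1)])
    then show ?case using Suc.prems by (simp add: gg_def)
  qed
  have "\<forall>n. gg zz * hitq \<beta> h L {m1} {zz, pp} (Suc n) m1 \<le> e1 m1"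
    using step[OF ind] const_in_configs[of "-1" L] by auto
  moreover have "(\<lambda>n. gg zz * hitq \<beta> h L {m1} {zz, pp} (Suc n) m1) \<longlonglongrightarrow> gg zz * e2 m1"
    by (intro tendsto_mult_left LIMSEQ_Suc hitq_lim[OF L0])
  ultimately show ?thesis by (intro LIMSEQ_le_const2) auto
qed

end




lemma gz_bound:
  fixes \<beta> h :: real and L :: nat
  assumes L0: "0 < L" and bpos: "0 < \<beta>" and h0: "0 < h" and hL: "h * real L * real L \<ge> 2 * real L + 4"
  shows "(1 - gg \<beta> h L (const_conf L 0))^2 \<le> 4 * (real (L*L))^2 * exp (- (2 - h) * \<beta>)"
proof -
  let ?g = "gg \<beta> h L"
  let ?m1 = "const_conf L (-1)"
  define Z where "Z = Zp \<beta> h L"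
  have Zpos: "0 < Z" unfolding Z_def by (rule Zp_pos)
  define K where "K = Z * exp (\<beta> * (2 * real L + 2))"
  have tmb: "1 / (gibbs \<beta> h L (rp L 0 1 i) * rate \<beta> h L (rp L 0 1 i) (rp L 0 1 (Suc i))) \<le> K" for i
  proof -
    have mx: "max (ham h L (rp L 0 1 i)) (ham h L (rp L 0 1 (Suc i))) \<le> 2 * real L + 2"
      using ham_rp[OF L0, of h i] ham_rp[OF L0, of h "Suc i"] h0 by simp
    have "1 / (gibbs \<beta> h L (rp L 0 1 i) * rate \<beta> h L (rp L 0 1 i) (rp L 0 1 (Suc i)))
        = Z * exp (\<beta> * max (ham h L (rp L 0 1 i)) (ham h L (rp L 0 1 (Suc i))))"
      unfolding mu_rate Z_def[symmetric] by (simp add: exp_minus field_simps)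
    also have "\<dots> \<le> K" unfolding K_def
      using mx bpos Zpos by (intro mult_left_mono) (auto intro: mult_left_mono)
    finally show ?thesis .
  qed
  have sumle: "(\<Sum>i<L*L. 1 / (gibbs \<beta> h L (rp L 0 1 i) * rate \<beta> h L (rp L 0 1 i) (rp L 0 1 (Suc i)))) \<le> real (L*L) * K"
    using sum_mono[of "{..<L*L}", OF tmb] by simp
  have gm1: "gibbs \<beta> h L ?m1 = exp (- \<beta> * (h * real (L*L))) / Z"
    unfolding gibbs_def Z_def Zp_def ham_const by simp
  have SSle: "SS \<beta> h L \<le> 2 * (exp (- \<beta> * (h * real (L*L))) / Z) * (2 * real (L*L))"
  proof -
    have "SS \<beta> h L = 2 * gibbs \<beta> h L ?m1 * lam \<beta> h L ?m1 * escape_prob \<beta> h L {?m1} {const_conf L 1} ?m1"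
      by (rule SS_eq[OF L0 bpos])
    also have "\<dots> \<le> 2 * gibbs \<beta> h L ?m1 * (2 * real (L*L)) * 1"
      using lam_le[of \<beta> h L ?m1] bpos esc_le1[OF L0] esc_nonneg[OF L0] gibbs_pos[of \<beta> h L ?m1] lam_nonneg[of \<beta> h L ?m1]
      by (intro mult_mono) auto
    finally show ?thesis unfolding gm1 by simp
  qed
  have SSnn: "0 \<le> SS \<beta> h L"
    by (intro sum_nonneg mult_nonneg_nonneg less_imp_le[OF gibbs_pos] less_imp_le[OF rate_pos]) auto
  have "(1 - ?g (const_conf L 0))^2 = (?g (const_conf L 1) - ?g (const_conf L 0))^2"
    by (simp add: gg_def[OF L0 bpos])
  also have "\<dots> \<le> SS \<beta> h L * (\<Sum>i<L*L. 1 / (gibbs \<beta> h L (rp L 0 1 i) * rate \<beta> h L (rp L 0 1 i) (rp L 0 1 (Suc i))))"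
    by (rule path_rp[OF L0 bpos]) auto
  also have "\<dots> \<le> (2 * (exp (- \<beta> * (h * real (L*L))) / Z) * (2 * real (L*L))) * (real (L*L) * K)"
    by (rule mult_mono'[OF SSle sumle SSnn]) (auto intro!: sum_nonneg mult_nonneg_nonneg less_imp_le[OF gibbs_pos] less_imp_le[OF rate_pos])
  also have "\<dots> = 4 * (real (L*L))^2 * exp (\<beta> * (2 * real L + 2) - \<beta> * (h * real (L*L)))"
    unfolding K_def using Zpos by (simp add: exp_diff exp_minus field_simps power2_eq_square)
  also have "\<dots> \<le> 4 * (real (L*L))^2 * exp (- (2 - h) * \<beta>)"
  proof -
    have "\<beta> * (2 * real L + 2) - \<beta> * (h * real (L*L)) \<le> - (2 - h) * \<beta>"
    proof -
      have "2 * real L + 2 - h * real (L*L) \<le> - (2 - h)" using hL h0 by (simp add: algebra_simps)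
      then have "\<beta> * (2 * real L + 2 - h * real (L*L)) \<le> \<beta> * (- (2 - h))"
        using bpos by (intro mult_left_mono) auto
      then show ?thesis by (simp add: algebra_simps)
    qed
    then show ?thesis by (intro mult_left_mono) auto
  qed
  finally show ?thesis .
qed




lemma n0_facts:
  assumes "0 < h" "h < 1"
  shows "2 \<le> n0 h" "2 < h * (real (n0 h) + 1)"
proof -
  have g2: "2 < 2 / h" using assms by (simp add: field_simps)
  then have "2 \<le> \<lfloor>2 / h\<rfloor>" by (simp add: le_floor_iff)
  then show "2 \<le> n0 h" unfolding n0_def by linarith
  have r: "real (n0 h) = of_int \<lfloor>2 / h\<rfloor>" unfolding n0_def by (rule of_nat_nat) (use \<open>2 \<le> \<lfloor>2 / h\<rfloor>\<close> in linarith)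
  have "2 / h < of_int \<lfloor>2 / h\<rfloor> + 1" by linarith
  then have "2 / h < real (n0 h) + 1" using r by simp
  then show "2 < h * (real (n0 h) + 1)" using assms by (simp add: field_simps)
qed

lemma hL_bound:
  assumes "0 < h" "h < 1" "n0 h * (n0 h + 1) + 2 \<le> L"
  shows "2 * real L + 4 \<le> h * real L * real L" "0 < L"
proof -
  note nf = n0_facts[OF assms(1,2)]
  have "real (n0 h * (n0 h + 1) + 2) \<le> real L" using assms(3) by linarith
  then have Lge: "real (n0 h) * (real (n0 h) + 1) + 2 \<le> real L" by (simp add: algebra_simps)
  have "h * (real (n0 h) * (real (n0 h) + 1)) = real (n0 h) * (h * (real (n0 h) + 1))" by (simp add: algebra_simps)
  also have "\<dots> \<ge> real (n0 h) * 2" using nf by (intro mult_left_mono) auto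
  finally have a: "h * (real (n0 h) * (real (n0 h) + 1)) \<ge> 4" using nf by linarith
  have "h * real L \<ge> h * (real (n0 h) * (real (n0 h) + 1))" using Lge assms by (intro mult_left_mono) auto
  then have hL4: "h * real L \<ge> 4" using a by linarith
  have L2: "real L \<ge> 2" using Lge nf by (smt (verit) mult_nonneg_nonneg of_nat_0_le_iff)
  have "h * real L * real L \<ge> 4 * real L" using hL4 L2 by (intro mult_right_mono) auto
  then show "2 * real L + 4 \<le> h * real L * real L" using L2 by linarith
  show "0 < L" using L2 by simp
qed

theorem lemma7p4:
  fixes h :: real and L :: "real \<Rightarrow> nat"
  assumes "0 < h" and "h < 1" and "2 / h \<notin> \<int>"
    and "\<forall>\<beta> > 0. L \<beta> \<ge> n0 h * (n0 h + 1) + 2"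
    and "((\<lambda>\<beta>. sqrt (real (card (torus (L \<beta>)))) *
            (exp (- ((real (n0 h) + 1) * h - 2) * \<beta>) + exp (- h * \<beta>))) \<longlongrightarrow> 0) at_top"
    and "((\<lambda>\<beta>. real (card (torus (L \<beta>))) ^ 2 * exp (- (2 - h) * \<beta>)) \<longlongrightarrow> 0) at_top"
  shows "((\<lambda>\<beta>. cap \<beta> h (L \<beta>) {const_conf (L \<beta>) (-1)} {const_conf (L \<beta>) 1}
              / cap \<beta> h (L \<beta>) {const_conf (L \<beta>) (-1)} {const_conf (L \<beta>) 0, const_conf (L \<beta>) 1})
          \<longlongrightarrow> 1) at_top"
proof -
  define X where "X \<beta> = real (card (torus (L \<beta>))) ^ 2 * exp (- (2 - h) * \<beta>)" for \<beta>
  define r where "r \<beta> = cap \<beta> h (L \<beta>) {const_conf (L \<beta>) (-1)} {const_conf (L \<beta>) 1}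
              / cap \<beta> h (L \<beta>) {const_conf (L \<beta>) (-1)} {const_conf (L \<beta>) 0, const_conf (L \<beta>) 1}" for \<beta>
  have key: "1 - 2 * sqrt (X \<beta>) \<le> r \<beta> \<and> r \<beta> \<le> 1" if bpos: "0 < \<beta>" for \<beta>
  proof -
    let ?L = "L \<beta>"
    have Lb: "n0 h * (n0 h + 1) + 2 \<le> ?L" using assms(4) bpos by auto
    note hb = hL_bound[OF assms(1,2) Lb]
    have L0: "0 < ?L" by (rule hb(2))
    let ?m1 = "const_conf ?L (-1)"
    let ?e1 = "escape_prob \<beta> h ?L {?m1} {const_conf ?L 1} ?m1"
    let ?e2 = "escape_prob \<beta> h ?L {?m1} {const_conf ?L 0, const_conf ?L 1} ?m1"
    let ?c = "gibbs \<beta> h ?L ?m1 * lam \<beta> h ?L ?m1"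
    have cpos: "0 < ?c" by (intro mult_pos_pos gibbs_pos lam_pos[OF L0])
    have rr: "r \<beta> = ?e1 / ?e2"
    proof -
      have "r \<beta> = (?c * ?e1) / (?c * ?e2)" unfolding r_def cap_def by (simp add: mult.assoc)
      then show ?thesis using cpos by (metis less_irrefl mult_divide_mult_cancel_left)
    qed
    have e1p: "0 < ?e1" by (rule e1_pos[OF L0 bpos])
    have e12: "?e1 \<le> ?e2" by (rule e1_le_e2[OF L0 bpos])
    have e2p: "0 < ?e2" using e1p e12 by linarith
    have low: "gg \<beta> h ?L (const_conf ?L 0) * ?e2 \<le> ?e1" by (rule lower[OF L0 bpos])
    have gz1: "gg \<beta> h ?L (const_conf ?L 0) \<le> 1" by (rule gg_range[OF L0 bpos])
    have sq: "(1 - gg \<beta> h ?L (const_conf ?L 0))^2 \<le> 4 * X \<beta>"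
      using gz_bound[OF L0 bpos assms(1) hb(1)] unfolding X_def card_torus by simp
    have "1 - gg \<beta> h ?L (const_conf ?L 0) \<le> sqrt (4 * X \<beta>)"
      using real_le_rsqrt[OF sq] .
    also have "sqrt (4 * X \<beta>) = 2 * sqrt (X \<beta>)" by (simp add: real_sqrt_mult)
    finally have gzl: "1 - 2 * sqrt (X \<beta>) \<le> gg \<beta> h ?L (const_conf ?L 0)" by linarith
    have "gg \<beta> h ?L (const_conf ?L 0) \<le> ?e1 / ?e2" using low e2p by (simp add: field_simps)
    then have "1 - 2 * sqrt (X \<beta>) \<le> r \<beta>" using gzl rr by linarith
    moreover have "r \<beta> \<le> 1" using rr e12 e2p by simp
    ultimately show ?thesis by simp
  qed
  have X0: "(X \<longlongrightarrow> 0) at_top" using assms(6) unfolding X_def .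
  have lo: "((\<lambda>\<beta>. 1 - 2 * sqrt (X \<beta>)) \<longlongrightarrow> 1) at_top"
    using tendsto_diff[OF tendsto_const tendsto_mult[OF tendsto_const tendsto_real_sqrt[OF X0]], of 1 2] by simp
  have ev: "eventually (\<lambda>\<beta>::real. 0 < \<beta>) at_top" by (rule eventually_gt_at_top[of "0::real"])
  have ev1: "eventually (\<lambda>\<beta>. 1 - 2 * sqrt (X \<beta>) \<le> r \<beta>) at_top"
    using ev by (rule eventually_mono) (use key in blast)
  have ev2: "eventually (\<lambda>\<beta>. r \<beta> \<le> 1) at_top"
    using ev by (rule eventually_mono) (use key in blast)
  have "(r \<longlongrightarrow> 1) at_top"
    by (rule tendsto_sandwich[OF ev1 ev2 lo tendsto_const])
  then show ?thesis unfolding r_def .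
qed


end
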